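(* Let $H$ be a digraph with at least two vertices and $r\in V(H)$ such that every vertex of $H$ is reachable from $r$, and let $(\hat T,\{B_x\}_{x\in V(\hat T)})$ be the $r$-rooted cut decomposition of $H$. Let $x\in V(\hat T)$, let $\hat P=x_0x_1\dots x_\ell$ be the path in $\hat T$ from $r=x_0$ to $x=x_\ell$, and let $F_0,\dots,F_\ell$ be the fins of $\hat P$. Let $P$ be a directed path in $H$ from $r$ to a vertex $v\in B_x$. Then for every $0\le i<\ell$, $P$ visits $x_i$ before $x_{i+1}$, and the vertices of the subpath $P[x_i,x_{i+1}]$ other than $x_{i+1}$ are all contained in $\bigcup_{y\in F_i}B_y$.
   Context: Digraphs are finite and without loops; paths are directed. For a path $P$ and vertices $a,b$ on it with $a$ before $b$, $P[a,b]$ is the subpath from $a$ to $b$. A vertex $v$ is bi-reachable from $r$ if there are two internally vertex-disjoint directed paths from $r$ to $v$. For a digraph $H$ with at least two vertices and $r\in V(H)$ such that every vertex of $H$ is reachable from $r$, the diblock $B_r$ of $r$ in $H$ is the set of all vertices bi-reachable from $r$, together with $r$ and all out-neighbours of $r$. For $x\in B_r\setminus\{r\}$ let $X_x$ be the set of vertices $v\in V(H)\setminus B_r$ such that every directed $r$–$v$ path intersects $B_r$ for the last time in $x$; $x$ is a bottleneck of $B_r$ if $X_x\ne\emptyset$ (the sets $X_x$ partition $V(H)\setminus B_r$). The $r$-rooted cut decomposition $(\hat T,\{B_x\}_{x\in V(\hat T)})$ of $H$ is defined recursively: $\hat T$ is a rooted tree with root $r$ and $V(\hat T)\subseteq V(H)$;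 the set associated with the root is $B_r$; the children of $r$ are the bottlenecks of $B_r$; and for each bottleneck $x$, the subtree of $\hat T$ rooted at $x$ together with its associated sets is the $x$-rooted cut decomposition of the induced subgraph $H[X_x\cup\{x\}]$. For a node $x$, $\hat T_x$ is the subtree of $\hat T$ rooted at $x$. For a path $x_0x_1\dots x_\ell$ in $\hat T$ from the root $x_0$, its fins are $F_{i}=V(\hat T_{x_i})\setminus V(\hat T_{x_{i+1}})$ for $0\le i<\ell$ and $F_\ell=V(\hat T_{x_\ell})$. *)

theory Defs
  imports Main "HOL-Library.Sublist"
begin

definition dpath :: "'a set \<Rightarrow> 'a rel \<Rightarrow> 'a list \<Rightarrow> bool" where
  "dpath W E P \<longleftrightarrow> P \<noteq> [] \<and> distinct P \<and> set P \<subseteq> W \<and>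
     (\<forall>i. Suc i < length P \<longrightarrow> (P ! i, P ! Suc i) \<in> E)"

definition bireach :: "'a set \<Rightarrow> 'a rel \<Rightarrow> 'a \<Rightarrow> 'a \<Rightarrow> bool" where
  "bireach W E r v \<longleftrightarrow> (\<exists>P Q. dpath W E P \<and> dpath W E Q \<and>
     hd P = r \<and> last P = v \<and> hd Q = r \<and> last Q = v \<and>
     set P \<inter> set Q \<subseteq> {r, v})"

definition diblock :: "'a set \<Rightarrow> 'a rel \<Rightarrow> 'a \<Rightarrow> 'a set" where
  "diblock W E r = {v \<in> W. bireach W E r v} \<union> {r} \<union> {v \<in> W. (r, v) \<in> E}"

definition Xset :: "'a set \<Rightarrow> 'a rel \<Rightarrow> 'a \<Rightarrow> 'a \<Rightarrow> 'a set" where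
  "Xset W E r x = {v \<in> W - diblock W E r. \<forall>P. dpath W E P \<and> hd P = r \<and> last P = v \<longrightarrow>
      last (filter (\<lambda>u. u \<in> diblock W E r) P) = x}"

definition bottleneck :: "'a set \<Rightarrow> 'a rel \<Rightarrow> 'a \<Rightarrow> 'a \<Rightarrow> bool" where
  "bottleneck W E r x \<longleftrightarrow> x \<in> diblock W E r - {r} \<and> Xset W E r x \<noteq> {}"

text \<open>The r-rooted cut decomposition of (V,E): a node of the tree is identified with
  its root path [x_0,...,x_l] in the tree; the second argument is the vertex set W
  of the subgraph H[W] whose x_l-rooted cut decomposition is the subtree at x_l.\<close>
inductive cdnode :: "'a set \<Rightarrow> 'a rel \<Rightarrow> 'a \<Rightarrow> 'a list \<Rightarrow> 'a set \<Rightarrow> bool"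
  for V E r where
  root: "cdnode V E r [r] V"
| child: "cdnode V E r p W \<Longrightarrow> bottleneck W E (last p) x \<Longrightarrow>
          cdnode V E r (p @ [x]) (Xset W E (last p) x \<union> {x})"

definition cdbag :: "'a set \<Rightarrow> 'a rel \<Rightarrow> 'a \<Rightarrow> 'a list \<Rightarrow> 'a set" where
  "cdbag V E r q = {v. \<exists>W. cdnode V E r q W \<and> v \<in> diblock W E (last q)}"

text \<open>Union of the bags over the i-th fin F_i of the tree path p = x_0 ... x_l (i < l):
  nodes in the subtree of x_i but not in the subtree of x_{i+1}.\<close>
definition finbags :: "'a set \<Rightarrow> 'a rel \<Rightarrow> 'a \<Rightarrow> 'a list \<Rightarrow> nat \<Rightarrow> 'a set" where
  "finbags V E r p i = \<Union> {cdbag V E r q | q. (\<exists>W. cdnode V E r q W) \<and>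
      prefix (take (Suc i) p) q \<and> \<not> prefix (take (Suc (Suc i)) p) q}"

end

theory Submission
  imports Defs
begin

abbreviation succE :: "'a rel \<Rightarrow> 'a list \<Rightarrow> bool" where
  "succE E xs \<equiv> successively (\<lambda>a b. (a,b) \<in> E) xs"

lemma dpath_alt: "dpath W E P \<longleftrightarrow> P \<noteq> [] \<and> distinct P \<and> set P \<subseteq> W \<and> succE E P"
  by (auto simp: dpath_def successively_conv_nth)

lemma dpath_single: "w \<in> W \<Longrightarrow> dpath W E [w]"
  by (simp add: dpath_alt)

lemma dpath_append: "xs \<noteq> [] \<Longrightarrow> ys \<noteq> [] \<Longrightarrow>
   dpath W E (xs @ ys) \<longleftrightarrow> dpath W E xs \<and> dpath W E ys \<and> set xs \<inter> set ys = {} \<and> (last xs, hd ys) \<in> E"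
  by (auto simp: dpath_alt successively_append_iff)

lemma dpath_appendD1: "dpath W E (xs @ ys) \<Longrightarrow> xs \<noteq> [] \<Longrightarrow> dpath W E xs"
  by (cases "ys = []") (auto simp: dpath_append)

lemma dpath_appendD2: "dpath W E (xs @ ys) \<Longrightarrow> ys \<noteq> [] \<Longrightarrow> dpath W E ys"
  by (cases "xs = []") (auto simp: dpath_append)

lemma dpath_restrict: "dpath W E P \<Longrightarrow> set P \<subseteq> W' \<Longrightarrow> dpath W' E P"
  by (auto simp: dpath_alt)

lemma dpath_cons: "dpath W E (x # xs) \<longleftrightarrow> x \<in> W \<and> (xs = [] \<or> (dpath W E xs \<and> x \<notin> set xs \<and> (x, hd xs) \<in> E))"
  using dpath_append[of "[x]" xs W E] by (auto simp: dpath_alt)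

lemma succE_appendD1: "succE E (xs @ ys) \<Longrightarrow> succE E xs"
  by (simp add: successively_append_iff)
lemma succE_appendD2: "succE E (xs @ ys) \<Longrightarrow> succE E ys"
  by (simp add: successively_append_iff)

lemma walk_to_path:
  assumes "xs \<noteq> []" "set xs \<subseteq> W" "succE E xs"
  shows "\<exists>P. dpath W E P \<and> hd P = hd xs \<and> last P = last xs \<and> set P \<subseteq> set xs"
using assms proof (induction "length xs" arbitrary: xs rule: less_induct)
  case less
  show ?case
  proof (cases "distinct xs")
    case True thus ?thesis using less.prems by (auto simp: dpath_alt)
  next
    case False
    then obtain a b c y where xs: "xs = a @ [y] @ b @ [y] @ c" using not_distinct_decomp by blast
    let ?ys = "a @ [y] @ c"
    have s1: "succE E (a @ [y])" using less.prems(3) xs succE_appendD1[of E "a @ [y]"] by simp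
    have s2: "succE E ([y] @ c)" using less.prems(3) xs succE_appendD2[of E "a @ y # b" "y # c"] by simp
    have "succE E ?ys" using s1 s2
      by (auto simp: successively_append_iff successively_Cons)
    moreover have "length ?ys < length xs" using xs by simp
    moreover have "?ys \<noteq> []" by simp
    moreover have "set ?ys \<subseteq> W" using less.prems xs by auto
    ultimately obtain P where P: "dpath W E P" "hd P = hd ?ys" "last P = last ?ys" "set P \<subseteq> set ?ys"
      using less.hyps by blast
    have "hd ?ys = hd xs" using xs by (cases a) auto
    moreover have "last ?ys = last xs" using xs by (cases c rule: rev_cases) auto
    moreover have "set ?ys \<subseteq> set xs" using xs by auto
    ultimately show ?thesis using P by (metis order_trans)
  qed
qed

lemma dpath_join:
  assumes "dpath W E \<alpha>" "dpath W E ys" "hd ys = last \<alpha>" "set \<alpha> \<inter> set (tl ys) = {}"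
  shows "dpath W E (\<alpha> @ tl ys) \<and> last (\<alpha> @ tl ys) = last ys"
proof (cases ys)
  case Nil thus ?thesis using assms by (simp add: dpath_alt)
next
  case (Cons h ys')
  show ?thesis
  proof (cases "ys' = []")
    case True thus ?thesis using assms Cons by simp
  next
    case False
    have "dpath W E ys'" "(h, hd ys') \<in> E" using assms(2) Cons False by (auto simp: dpath_cons)
    moreover have "\<alpha> \<noteq> []" using assms(1) by (simp add: dpath_alt)
    ultimately show ?thesis using assms Cons False by (auto simp: dpath_append)
  qed
qed

lemma dpath_hd_in: "dpath W E P \<Longrightarrow> hd P \<in> set P"
  by (simp add: dpath_alt)
lemma dpath_last_in: "dpath W E P \<Longrightarrow> last P \<in> set P"
  by (simp add: dpath_alt)

lemma menger_aux:
  assumes bypass: "\<And>s. s \<in> W \<Longrightarrow> s \<noteq> x \<Longrightarrow> s \<noteq> z \<Longrightarrow> \<exists>Q. dpath W E Q \<and> hd Q = x \<and> last Q = z \<and> s \<notin> set Q"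
  shows "dpath W E R \<Longrightarrow> last R = z \<Longrightarrow> dpath W E \<alpha> \<Longrightarrow> dpath W E \<beta> \<Longrightarrow> hd \<alpha> = x \<Longrightarrow> hd \<beta> = x
     \<Longrightarrow> last \<alpha> = hd R \<Longrightarrow> q \<in> set (tl R) \<Longrightarrow> last \<beta> = q \<Longrightarrow> set \<alpha> \<inter> set \<beta> = {x}
     \<Longrightarrow> set \<alpha> \<inter> set (tl R) = {} \<Longrightarrow> set \<beta> \<inter> set (tl R) = {q}
     \<Longrightarrow> bireach W E x z"
proof (induction "length R" arbitrary: R \<alpha> \<beta> q rule: less_induct)
  case less
  note R = less.prems(1) and lastR = less.prems(2) and al = less.prems(3) and be = less.prems(4)
    and hal = less.prems(5) and hbe = less.prems(6) and lal = less.prems(7) and qR = less.prems(8)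
    and lbe = less.prems(9) and ab = less.prems(10) and aR = less.prems(11) and bR = less.prems(12)
  have ane: "\<alpha> \<noteq> []" "\<beta> \<noteq> []" "R \<noteq> []" using al be R by (auto simp: dpath_alt)
  have dR: "distinct R" "set R \<subseteq> W" using R by (auto simp: dpath_alt)
  show ?case
  proof (cases "q = z")
    case True
    have tlne: "tl R \<noteq> []" using qR by auto
    have Rc: "R = hd R # tl R" using ane by simp
    have "dpath W E (tl R)" "(hd R, hd (tl R)) \<in> E" using R Rc tlne dpath_cons[of W E "hd R" "tl R"] by auto
    hence P1: "dpath W E (\<alpha> @ tl R)" using al aR tlne ane lal by (auto simp: dpath_append)
    have "last (\<alpha> @ tl R) = z" using tlne lastR by (metis Rc last_ConsR last_appendR)
    moreover have "hd (\<alpha> @ tl R) = x" using ane hal by simp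
    moreover have "set (\<alpha> @ tl R) \<inter> set \<beta> \<subseteq> {x, z}" using ab bR True by auto
    ultimately show ?thesis unfolding bireach_def using P1 be hbe lbe True by blast
  next
    case False
    obtain Ra Rb where Rsp: "R = Ra @ q # Rb" using qR split_list[of q R] by (metis list.sel(2) list.set_sel(2))
    have xa: "x \<in> set \<alpha>" "x \<in> set \<beta>" using ab by auto
    have qa: "q \<notin> set \<alpha>" "q \<noteq> x" using qR aR xa by auto
    have "hd R \<in> set \<alpha>" using lal ane by (metis last_in_set)
    hence Rane: "Ra \<noteq> []" using Rsp qa by auto
    have Rbne: "Rb \<noteq> []" using Rsp lastR False by auto
    have tlR: "tl R = tl Ra @ q # Rb" using Rsp Rane by simp
    have dRs: "set Ra \<inter> set Rb = {}" "q \<notin> set Ra" "q \<notin> set Rb" "distinct Ra" "distinct Rb"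
      using dR Rsp by auto
    have hdRa: "hd Ra = hd R" using Rsp Rane by simp
    have zRb: "z \<in> set Rb" using lastR Rsp Rbne by simp (metis last_in_set)
    have qW: "q \<in> W" using dR Rsp by auto
    obtain Q where Q: "dpath W E Q" "hd Q = x" "last Q = z" "q \<notin> set Q" using bypass[OF qW qa(2) False] by blast
    define S where "S = set \<alpha> \<union> set \<beta> \<union> set Ra"
    have "x \<in> set Q" using Q dpath_hd_in by metis
    hence "\<exists>w\<in>set Q. w \<in> S" using xa S_def by blast
    then obtain Q1 t Q2 where Qsp: "Q = Q1 @ t # Q2" "t \<in> S" "\<forall>w\<in>set Q2. w \<notin> S"
      using split_list_last_prop[of Q "\<lambda>w. w \<in> S"] by blast
    have zS: "z \<notin> S" using zRb aR bR dRs False tlR unfolding S_def by auto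
    have Q2ne: "Q2 \<noteq> []"
    proof
      assume "Q2 = []"
      hence "last Q = t" using Qsp by simp
      thus False using Q(3) zS Qsp(2) by simp
    qed
    hence "last Q = last Q2" using Qsp by simp
    hence "z \<in> set Q2" using Q(3) Q2ne last_in_set by metis
    then obtain Q3 f Q4 where Q2sp: "Q2 = Q3 @ f # Q4" "f \<in> set Rb" "\<forall>w\<in>set Q3. w \<notin> set Rb"
      using split_list_first_prop[of Q2 "\<lambda>w. w \<in> set Rb"] zRb by blast
    have Qm: "dpath W E (t # Q3 @ [f])"
    proof -
      have Qeq: "Q = Q1 @ ((t # Q3 @ [f]) @ Q4)" using Qsp Q2sp by simp
      have h: "dpath W E ((t # Q3 @ [f]) @ Q4)"
        by (rule dpath_appendD2[of W E Q1]) (metis Q(1) Qeq, simp)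
      from h show ?thesis by (rule dpath_appendD1) simp
    qed
    have Qme: "(t, hd (Q3 @ [f])) \<in> E" "dpath W E (Q3 @ [f])" using Qm dpath_cons[of W E t "Q3 @ [f]"] by auto
    have Q3S: "set (Q3 @ [f]) \<inter> S = {}" using Qsp Q2sp by auto
    have Q3Rb: "set Q3 \<inter> set Rb = {}" using Q2sp by auto
    have Q3a: "set (Q3 @ [f]) \<inter> set \<alpha> = {}" "set (Q3 @ [f]) \<inter> set \<beta> = {}" "set (Q3 @ [f]) \<inter> set Ra = {}"
      using Q3S unfolding S_def by auto
    have tlRa_sub: "set (tl Ra) \<subseteq> set Ra" using Rane by (cases Ra) auto
    have qQ: "q \<notin> set (Q3 @ [f])" "t \<noteq> q" using Q(4) Qsp Q2sp by auto
    define R' where "R' = q # Rb"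
    have R': "dpath W E R'" "last R' = z" "f \<in> set (tl R')" "length R' < length R"
      using R Rsp Rane Q2sp lastR Rbne dpath_appendD2[of W E Ra "q # Rb"] unfolding R'_def by auto
    have aRb: "set \<alpha> \<inter> set Rb = {}" using aR tlR by auto
    have bRb: "set \<beta> \<inter> set Rb = {}" using bR tlR dRs by auto
    have tlRa: "set (tl Ra) \<subseteq> set (tl R)" "q \<notin> set (tl Ra)" "set (tl Ra) \<inter> set Rb = {}"
    proof -
      have "set (tl Ra) \<subseteq> set Ra" using Rane by (cases Ra) auto
      thus "set (tl Ra) \<subseteq> set (tl R)" "q \<notin> set (tl Ra)" "set (tl Ra) \<inter> set Rb = {}"
        using tlR dRs by auto
    qed
    consider (A) "t \<in> set \<alpha>" | (B) "t \<notin> set \<alpha>" "t \<in> set \<beta>" | (C) "t \<notin> set \<alpha>" "t \<notin> set \<beta>" "t \<in> set Ra"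
      using Qsp S_def by blast
    thus ?thesis
    proof cases
      case A
      then obtain a1 a2 where asp: "\<alpha> = a1 @ t # a2" using split_list by metis
      define \<beta>' where "\<beta>' = (a1 @ [t]) @ (Q3 @ [f])"
      have "dpath W E (a1 @ [t])" using al asp dpath_appendD1[of W E "a1 @ [t]" a2] by simp
      hence b': "dpath W E \<beta>'" unfolding \<beta>'_def using Qme Q3S asp S_def by (subst dpath_append) auto
      have hb': "hd \<beta>' = x" using hal asp unfolding \<beta>'_def by (cases a1) auto
      have lb': "last \<beta>' = f" unfolding \<beta>'_def by simp
      have "x \<in> set \<beta>'" using hb' \<beta>'_def by (metis append_is_Nil_conv hd_in_set not_Cons_self2)
      hence i1: "set \<beta> \<inter> set \<beta>' = {x}" using ab asp Q3S unfolding \<beta>'_def S_def by auto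
      have i2: "set \<beta> \<inter> set (tl R') = {}" using bRb R'_def by simp
      have i3: "set \<beta>' \<inter> set (tl R') = {f}" using aRb asp Q3Rb Q2sp unfolding \<beta>'_def R'_def by auto
      show ?thesis using less.hyps[OF R'(4) R'(1) R'(2) be b' hbe hb' _ R'(3) lb' i1 i2 i3] lbe R'_def by simp
    next
      case B
      then obtain b1 b2 where bsp: "\<beta> = b1 @ t # b2" using split_list by metis
      define \<beta>' where "\<beta>' = (b1 @ [t]) @ (Q3 @ [f])"
      have "dpath W E (b1 @ [t])" using be bsp dpath_appendD1[of W E "b1 @ [t]" b2] by simp
      hence b': "dpath W E \<beta>'" unfolding \<beta>'_def using Qme Q3S bsp S_def by (subst dpath_append) auto
      have hb': "hd \<beta>' = x" using hbe bsp unfolding \<beta>'_def by (cases b1) auto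
      have lb': "last \<beta>' = f" unfolding \<beta>'_def by simp
      define \<alpha>' where "\<alpha>' = \<alpha> @ tl (Ra @ [q])"
      have "dpath W E (Ra @ [q])" using R Rsp dpath_appendD1[of W E "Ra @ [q]" Rb] by simp
      moreover have "set \<alpha> \<inter> set (tl (Ra @ [q])) = {}" using aR tlR Rane by auto
      ultimately have a': "dpath W E \<alpha>'" "last \<alpha>' = q"
        using dpath_join[OF al, of "Ra @ [q]"] hdRa lal Rane unfolding \<alpha>'_def by auto
      have ha': "hd \<alpha>' = x" using hal ane unfolding \<alpha>'_def by simp
      have qb2: "q \<in> set b2" using lbe bsp qQ by (cases b2 rule: rev_cases) auto
      have "distinct \<beta>" using be by (simp add: dpath_alt)
      hence qb1: "q \<notin> set b1" using bsp qb2 by auto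
      have "x \<in> set \<beta>'" using hb' \<beta>'_def by (metis append_is_Nil_conv hd_in_set not_Cons_self2)
      moreover have "x \<in> set \<alpha>'" using xa \<alpha>'_def by simp
      moreover have "set \<alpha>' \<inter> set \<beta>' \<subseteq> {x}"
      proof
        fix w assume w: "w \<in> set \<alpha>' \<inter> set \<beta>'"
        have s1: "set \<alpha>' \<subseteq> set \<alpha> \<union> set (tl Ra) \<union> {q}" unfolding \<alpha>'_def using Rane by auto
        have s2: "set \<beta>' \<subseteq> set b1 \<union> {t} \<union> set (Q3 @ [f])" unfolding \<beta>'_def by auto
        have bb: "set b1 \<subseteq> set \<beta>" "t \<in> set \<beta>" using bsp by auto
        have tb: "set (tl Ra) \<inter> set \<beta> = {}" using tlRa bR by auto
        have wa: "w \<in> set \<alpha> \<or> w \<in> set (tl Ra) \<or> w = q" using w s1 by auto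
        have wb: "w \<in> set b1 \<or> w = t \<or> w \<in> set (Q3 @ [f])" using w s2 by auto
        show "w \<in> {x}"
        proof (cases "w \<in> set (Q3 @ [f])")
          case True
          thus ?thesis using wa Q3a(1) Q3a(3) tlRa_sub qQ(1) by auto
        next
          case False
          hence "w \<in> set \<beta>" using wb bb by auto
          moreover have "w \<noteq> q" using wb qb1 qQ(2) False by auto
          ultimately have "w \<in> set \<alpha>" using wa tb by auto
          thus ?thesis using \<open>w \<in> set \<beta>\<close> ab by auto
        qed
      qed
      ultimately have i1: "set \<alpha>' \<inter> set \<beta>' = {x}" by auto
      have i2: "set \<alpha>' \<inter> set (tl R') = {}" using aRb tlRa dRs Rane unfolding \<alpha>'_def R'_def by auto
      have i3: "set \<beta>' \<inter> set (tl R') = {f}" using bRb bsp Q3Rb Q2sp unfolding \<beta>'_def R'_def by auto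
      show ?thesis using less.hyps[OF R'(4) R'(1) R'(2) a'(1) b' ha' hb' _ R'(3) lb' i1 i2 i3] a'(2) R'_def by simp
    next
      case C
      then obtain r1 r2 where rsp: "Ra = r1 @ t # r2" using split_list by metis
      define \<gamma> where "\<gamma> = \<alpha> @ tl (r1 @ [t])"
      have "dpath W E (r1 @ [t])" using R Rsp rsp dpath_appendD1[of W E "r1 @ [t]" "r2 @ q # Rb"] by simp
      moreover have "set \<alpha> \<inter> set (tl (r1 @ [t])) = {}"
      proof -
        have "set (tl (r1 @ [t])) \<subseteq> set (tl Ra)" using rsp by (cases r1) auto
        thus ?thesis using aR tlRa by auto
      qed
      moreover have "hd (r1 @ [t]) = hd R" using hdRa rsp by (cases r1) auto
      ultimately have g: "dpath W E \<gamma>" "last \<gamma> = t" using dpath_join[OF al, of "r1 @ [t]"] lal unfolding \<gamma>_def by auto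
      have sg: "set \<gamma> \<subseteq> set \<alpha> \<union> set (tl Ra) \<union> {t}"
        using rsp unfolding \<gamma>_def by (cases r1) auto
      have tlRaS: "set (tl Ra) \<subseteq> S" using S_def by (meson Un_upper2 dual_order.trans list.set_sel(2) Rane subsetI)
      define \<beta>' where "\<beta>' = \<gamma> @ (Q3 @ [f])"
      have "set \<gamma> \<inter> set (Q3 @ [f]) = {}" using sg Q3a tlRa_sub Q3S Qsp(2) by blast
      hence b': "dpath W E \<beta>'" unfolding \<beta>'_def using g Qme by (subst dpath_append) (auto simp: dpath_alt)
      have hb': "hd \<beta>' = x" using hal ane unfolding \<beta>'_def \<gamma>_def by simp
      have lb': "last \<beta>' = f" unfolding \<beta>'_def by simp
      have "x \<in> set \<beta>'" using xa unfolding \<beta>'_def \<gamma>_def by simp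
      moreover have "set \<beta> \<inter> set \<beta>' \<subseteq> {x}"
      proof
        fix w assume w: "w \<in> set \<beta> \<inter> set \<beta>'"
        have tb: "set (tl Ra) \<inter> set \<beta> = {}" using tlRa bR by auto
        have "w \<notin> set (Q3 @ [f])" using w Q3a(2) by auto
        hence "w \<in> set \<gamma>" using w unfolding \<beta>'_def by auto
        hence "w \<in> set \<alpha>" using sg w tb C(2) by auto
        thus "w \<in> {x}" using w ab by auto
      qed
      ultimately have i1: "set \<beta> \<inter> set \<beta>' = {x}" using xa by auto
      have i2: "set \<beta> \<inter> set (tl R') = {}" using bRb R'_def by simp
      have i3: "set \<beta>' \<inter> set (tl R') = {f}" using sg aRb tlRa Q3Rb Q2sp C rsp dRs unfolding \<beta>'_def R'_def by auto
      show ?thesis using less.hyps[OF R'(4) R'(1) R'(2) be b' hbe hb' _ R'(3) lb' i1 i2 i3] lbe R'_def by simp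
    qed
  qed
qed

lemma menger2:
  assumes P: "dpath W E P" "hd P = x" "last P = z" "x \<noteq> z"
    and bypass: "\<And>s. s \<in> W \<Longrightarrow> s \<noteq> x \<Longrightarrow> s \<noteq> z \<Longrightarrow> \<exists>Q. dpath W E Q \<and> hd Q = x \<and> last Q = z \<and> s \<notin> set Q"
  shows "bireach W E x z"
proof -
  obtain P' where Pc: "P = x # P'" using P by (cases P) (auto simp: dpath_alt)
  have P'ne: "P' \<noteq> []" using P Pc by auto
  have d: "dpath W E P'" "x \<notin> set P'" "(x, hd P') \<in> E" "x \<in> W" using P(1) Pc P'ne by (auto simp: dpath_cons)
  have hW: "hd P' \<in> W" using d(1) P'ne by (auto simp: dpath_alt)
  have b: "dpath W E [x, hd P']" using d hW P'ne by (auto simp: dpath_cons dpath_single hd_in_set)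
  show ?thesis
    apply (rule menger_aux[OF bypass P(1) P(3) dpath_single[OF d(4)] b, of "hd P'"])
    using Pc P'ne d(2) by (auto simp: hd_in_set)
qed

lemma lastB_split: "(y::'a) \<in> B \<Longrightarrow> \<forall>w\<in>set post. w \<notin> B \<Longrightarrow> last (filter (\<lambda>u. u \<in> B) (pre @ y # post)) = y"
proof -
  assume "y \<in> B" "\<forall>w\<in>set post. w \<notin> B"
  hence "filter (\<lambda>u. u \<in> B) post = []" by (simp add: filter_empty_conv)
  thus ?thesis using \<open>y \<in> B\<close> by simp
qed

lemma diblock_avoid:
  assumes "y \<in> diblock W E x" "s \<noteq> x" "s \<noteq> y" "x \<in> W"
  shows "\<exists>A. dpath W E A \<and> hd A = x \<and> last A = y \<and> s \<notin> set A"
proof -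
  consider (bi) "bireach W E x y" | (rt) "y = x" | (ed) "y \<noteq> x" "y \<in> W" "(x, y) \<in> E"
    using assms(1) unfolding diblock_def by blast
  thus ?thesis
  proof cases
    case bi
    then obtain P Q where PQ: "dpath W E P" "dpath W E Q" "hd P = x" "last P = y" "hd Q = x" "last Q = y"
      "set P \<inter> set Q \<subseteq> {x, y}" unfolding bireach_def by blast
    thus ?thesis using assms(2,3) by blast
  next
    case rt thus ?thesis using assms by (intro exI[of _ "[x]"]) (auto simp: dpath_single)
  next
    case ed thus ?thesis using assms by (intro exI[of _ "[x, y]"]) (auto simp: dpath_alt)
  qed
qed

lemma unique_lastB:
  assumes xW: "x \<in> W"
  shows "dpath W E Q1 \<Longrightarrow> hd Q1 = x \<Longrightarrow> last Q1 = u \<Longrightarrow> dpath W E Q2 \<Longrightarrow> hd Q2 = x \<Longrightarrow> last Q2 = u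
    \<Longrightarrow> u \<notin> diblock W E x
    \<Longrightarrow> last (filter (\<lambda>w. w \<in> diblock W E x) Q1) = last (filter (\<lambda>w. w \<in> diblock W E x) Q2)"
proof (induction "length Q1" arbitrary: Q1 Q2 u rule: less_induct)
  case less
  define B where "B = diblock W E x"
  note Q1 = less.prems(1-3) and Q2 = less.prems(4-6) and uB = less.prems(7)
  have xB: "x \<in> B" unfolding B_def diblock_def by auto
  have "x \<in> set Q1" "x \<in> set Q2" using Q1 Q2 dpath_hd_in by metis+
  then obtain p1 y1 t1 p2 y2 t2 where sp: "Q1 = p1 @ y1 # t1" "y1 \<in> B" "\<forall>w\<in>set t1. w \<notin> B"
    "Q2 = p2 @ y2 # t2" "y2 \<in> B" "\<forall>w\<in>set t2. w \<notin> B"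
    using split_list_last_prop[of Q1 "\<lambda>w. w \<in> B"] split_list_last_prop[of Q2 "\<lambda>w. w \<in> B"] xB by metis
  have l1: "last (filter (\<lambda>w. w \<in> B) Q1) = y1" using sp lastB_split by metis
  have l2: "last (filter (\<lambda>w. w \<in> B) Q2) = y2" using sp lastB_split by metis
  show ?case unfolding B_def[symmetric] l1 l2
  proof (rule ccontr)
    assume ne: "y1 \<noteq> y2"
    have uW: "u \<in> W" using Q1 dpath_last_in by (metis dpath_alt subsetD)
    have ux: "u \<noteq> x" "(x, u) \<notin> E" "\<not> bireach W E x u" using uB uW unfolding diblock_def by auto
    have "\<not> (\<forall>s. s \<in> W \<longrightarrow> s \<noteq> x \<longrightarrow> s \<noteq> u \<longrightarrow> (\<exists>Q. dpath W E Q \<and> hd Q = x \<and> last Q = u \<and> s \<notin> set Q))"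
      using menger2[OF Q1 ux(1)[symmetric]] ux(3) by blast
    then obtain s where s: "s \<in> W" "s \<noteq> x" "s \<noteq> u"
      and sall: "\<And>Q. dpath W E Q \<Longrightarrow> hd Q = x \<Longrightarrow> last Q = u \<Longrightarrow> s \<in> set Q" by blast
    have avoid: False if i: "y \<in> B" "s \<notin> set (y # t)" "dpath W E (y # t)" "last (y # t) = u" for y t
    proof -
      obtain A where A: "dpath W E A" "hd A = x" "last A = y" "s \<notin> set A"
        using diblock_avoid[of y W E x s] i s xW B_def by auto
      have Ane: "A \<noteq> []" using A by (simp add: dpath_alt)
      have w: "succE E (A @ t)"
      proof (cases "t = []")
        case True thus ?thesis using A by (simp add: dpath_alt)
      next
        case False
        hence "(y, hd t) \<in> E" "succE E t" using i(3) by (auto simp: dpath_alt successively_Cons)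
        thus ?thesis using A False by (auto simp: dpath_alt successively_append_iff)
      qed
      have "set (A @ t) \<subseteq> W" using A i(3) by (auto simp: dpath_alt)
      moreover have "hd (A @ t) = x" "last (A @ t) = u" using A Ane i(4) by (cases "t = []", auto)+
      ultimately obtain Q where Q: "dpath W E Q" "hd Q = x" "last Q = u" "set Q \<subseteq> set (A @ t)"
        using walk_to_path[of "A @ t" W E] w Ane by auto
      have "s \<notin> set (A @ t)" using A i(2) by auto
      thus False using sall[OF Q(1-3)] Q(4) by auto
    qed
    have suf1: "dpath W E (y1 # t1)" "last (y1 # t1) = u" using Q1 sp dpath_appendD2[of W E p1 "y1 # t1"] by auto
    have suf2: "dpath W E (y2 # t2)" "last (y2 # t2) = u" using Q2 sp dpath_appendD2[of W E p2 "y2 # t2"] by auto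
    have st: "s \<in> set t1" "s \<in> set t2"
      using avoid[OF sp(2) _ suf1] avoid[OF sp(5) _ suf2] sp ne by auto
    obtain a1 b1 where t1s: "t1 = a1 @ s # b1" using st split_list by metis
    obtain a2 b2 where t2s: "t2 = a2 @ s # b2" using st split_list by metis
    have b1ne: "b1 \<noteq> []" using Q1(3) sp(1) t1s s(3) by auto
    define Q1' where "Q1' = p1 @ y1 # a1 @ [s]"
    define Q2' where "Q2' = p2 @ y2 # a2 @ [s]"
    have Q1'p: "dpath W E Q1'" using Q1(1) sp(1) t1s dpath_appendD1[of W E Q1' b1] unfolding Q1'_def by simp
    have Q2'p: "dpath W E Q2'" using Q2(1) sp(4) t2s dpath_appendD1[of W E Q2' b2] unfolding Q2'_def by simp
    have "length Q1' < length Q1" using sp(1) t1s b1ne unfolding Q1'_def by simp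
    moreover have "hd Q1' = x" using Q1 sp t1s unfolding Q1'_def by (cases p1) simp_all
    moreover have "hd Q2' = x" using Q2 sp t2s unfolding Q2'_def by (cases p2) simp_all
    moreover have "s \<notin> diblock W E x" using st sp B_def by auto
    ultimately have "last (filter (\<lambda>w. w \<in> B) Q1') = last (filter (\<lambda>w. w \<in> B) Q2')"
      using less.hyps[OF _ Q1'p _ _ Q2'p] unfolding Q1'_def Q2'_def B_def by auto
    moreover have "last (filter (\<lambda>w. w \<in> B) Q1') = y1" unfolding Q1'_def
      by (rule lastB_split) (use sp st t1s in auto)
    moreover have "last (filter (\<lambda>w. w \<in> B) Q2') = y2" unfolding Q2'_def
      by (rule lastB_split) (use sp st t2s in auto)
    ultimately show False using ne by simp
  qed
qed

definition rooted :: "'a set \<Rightarrow> 'a rel \<Rightarrow> 'a \<Rightarrow> bool" where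
  "rooted W E x \<longleftrightarrow> x \<in> W \<and> (\<forall>u\<in>W. \<exists>Q. dpath W E Q \<and> hd Q = x \<and> last Q = u)"

lemma diblock_sub: "x \<in> W \<Longrightarrow> diblock W E x \<subseteq> W"
  unfolding diblock_def by auto

lemma x_in_diblock: "x \<in> diblock W E x"
  unfolding diblock_def by auto

lemma Xset_sub: "Xset W E x y \<subseteq> W"
  unfolding Xset_def by auto

lemma X_char:
  assumes "rooted W E x" "u \<in> W" "u \<notin> diblock W E x" "dpath W E Q" "hd Q = x" "last Q = u"
  shows "u \<in> Xset W E x (last (filter (\<lambda>w. w \<in> diblock W E x) Q))"
proof -
  have xW: "x \<in> W" using assms(1) unfolding rooted_def by simp
  have "\<forall>P. dpath W E P \<and> hd P = x \<and> last P = u \<longrightarrow>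
      last (filter (\<lambda>w. w \<in> diblock W E x) P) = last (filter (\<lambda>w. w \<in> diblock W E x) Q)"
    using unique_lastB[OF xW _ _ _ assms(4-6) assms(3)] by blast
  thus ?thesis unfolding Xset_def using assms(2,3) by simp
qed

lemma lastB_props:
  assumes "x \<in> W" "u \<notin> diblock W E x" "dpath W E Q" "hd Q = x" "last Q = u"
  shows "last (filter (\<lambda>w. w \<in> diblock W E x) Q) \<in> diblock W E x"
    "last (filter (\<lambda>w. w \<in> diblock W E x) Q) \<noteq> x"
proof -
  define B where "B = diblock W E x"
  have xB: "x \<in> B" unfolding B_def by (rule x_in_diblock)
  have "x \<in> set Q" using assms dpath_hd_in by metis
  then obtain p y t where sp: "Q = p @ y # t" "y \<in> B" "\<forall>w\<in>set t. w \<notin> B"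
    using split_list_last_prop[of Q "\<lambda>w. w \<in> B"] xB by metis
  have l: "last (filter (\<lambda>w. w \<in> B) Q) = y" using sp lastB_split by metis
  thus "last (filter (\<lambda>w. w \<in> diblock W E x) Q) \<in> diblock W E x" using sp B_def by simp
  show "last (filter (\<lambda>w. w \<in> diblock W E x) Q) \<noteq> x"
  proof
    assume "last (filter (\<lambda>w. w \<in> diblock W E x) Q) = x"
    hence yx: "y = x" using l B_def by simp
    obtain Q' where Qc: "Q = x # Q'" using assms(3,4) by (cases Q) (auto simp: dpath_alt)
    have "distinct Q" using assms(3) by (simp add: dpath_alt)
    hence "p = []" using sp yx Qc by (cases p) auto
    hence tQ: "t = Q'" using sp yx Qc by simp
    have "Q' \<noteq> []" using Qc assms(2,5) xB B_def by auto
    hence "(x, hd Q') \<in> E" "hd Q' \<in> W" using assms(3) Qc by (auto simp: dpath_alt successively_Cons)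
    hence "hd Q' \<in> B" unfolding B_def diblock_def by auto
    moreover have "hd Q' \<in> set t" using tQ \<open>Q' \<noteq> []\<close> by simp
    ultimately show False using sp by auto
  qed
qed

lemma child_rooted:
  assumes rt: "rooted W E x" and bn: "bottleneck W E x y"
  shows "rooted (Xset W E x y \<union> {y}) E y"
proof -
  define B where "B = diblock W E x"
  have xW: "x \<in> W" using rt unfolding rooted_def by simp
  have yB: "y \<in> B" "y \<noteq> x" using bn unfolding bottleneck_def B_def by auto
  have "\<exists>Q. dpath (Xset W E x y \<union> {y}) E Q \<and> hd Q = y \<and> last Q = u" if u: "u \<in> Xset W E x y \<union> {y}" for u
  proof (cases "u = y")
    case True thus ?thesis using yB xW B_def diblock_sub[OF xW] by (intro exI[of _ "[y]"]) (auto simp: dpath_single)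
  next
    case False
    hence uX: "u \<in> Xset W E x y" using u by auto
    hence uW: "u \<in> W" "u \<notin> B" unfolding Xset_def B_def by auto
    obtain Q where Q: "dpath W E Q" "hd Q = x" "last Q = u" using rt uW(1) unfolding rooted_def by blast
    have "\<forall>P. dpath W E P \<and> hd P = x \<and> last P = u \<longrightarrow> last (filter (\<lambda>w. w \<in> B) P) = y"
      using uX unfolding Xset_def B_def by simp
    hence lq: "last (filter (\<lambda>w. w \<in> B) Q) = y" using Q by blast
    have "x \<in> set Q" using Q dpath_hd_in by metis
    moreover have "x \<in> B" unfolding B_def by (rule x_in_diblock)
    ultimately obtain p y' t where sp: "Q = p @ y' # t" "y' \<in> B" "\<forall>w\<in>set t. w \<notin> B"
      using split_list_last_prop[of Q "\<lambda>w. w \<in> B"] by metis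
    have "y' = y" using lastB_split[of y' B t p] sp lq by simp
    hence sp: "Q = p @ y # t" "\<forall>w\<in>set t. w \<notin> B" using sp by auto
    have suf: "dpath W E (y # t)" using Q(1) sp dpath_appendD2[of W E p "y # t"] by simp
    have "set t \<subseteq> Xset W E x y"
    proof
      fix w assume w: "w \<in> set t"
      then obtain a b where tw: "t = a @ w # b" using split_list by metis
      define Qw where "Qw = p @ y # a @ [w]"
      have "dpath W E Qw" using Q(1) sp tw dpath_appendD1[of W E Qw b] unfolding Qw_def by simp
      moreover have "hd Qw = x" using Q sp unfolding Qw_def by (cases p) auto
      moreover have "last Qw = w" unfolding Qw_def by simp
      moreover have "w \<in> W" "w \<notin> B" using w sp suf by (auto simp: dpath_alt)
      moreover have "last (filter (\<lambda>w. w \<in> B) Qw) = y" unfolding Qw_def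
        by (rule lastB_split) (use yB sp tw in auto)
      ultimately show "w \<in> Xset W E x y" using X_char[OF rt, of w Qw] B_def by simp
    qed
    hence "dpath (Xset W E x y \<union> {y}) E (y # t)" by (intro dpath_restrict[OF suf]) auto
    moreover have "last (y # t) = u" using Q sp by simp
    ultimately show ?thesis by (intro exI[of _ "y # t"]) simp
  qed
  thus ?thesis unfolding rooted_def by auto
qed

lemma cdnode_rooted:
  assumes "cdnode V E r q U" "rooted V E r"
  shows "rooted U E (last q) \<and> U \<subseteq> V"
  using assms
proof (induction rule: cdnode.induct)
  case root thus ?case by simp
next
  case (child p W x)
  have rt: "rooted W E (last p)" and WV: "W \<subseteq> V" using child by auto
  have "x \<in> W" using child(2) diblock_sub[of "last p" W E] rt unfolding bottleneck_def rooted_def by blast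
  hence "Xset W E (last p) x \<union> {x} \<subseteq> V" using Xset_sub[of W E "last p" x] WV by auto
  moreover have "rooted (Xset W E (last p) x \<union> {x}) E x" by (rule child_rooted[OF rt child(2)])
  ultimately show ?case by simp
qed

lemma covering:
  assumes rV: "rooted V E r" and fin: "finite V"
  shows "cdnode V E r q U \<Longrightarrow> u \<in> U \<Longrightarrow>
    \<exists>q' U'. cdnode V E r q' U' \<and> prefix q q' \<and> u \<in> diblock U' E (last q')"
proof (induction "card U" arbitrary: q U rule: less_induct)
  case less
  have rt: "rooted U E (last q)" and UV: "U \<subseteq> V" using cdnode_rooted[OF less.prems(1) rV] by auto
  show ?case
  proof (cases "u \<in> diblock U E (last q)")
    case True thus ?thesis using less.prems(1) by (intro exI[of _ q] exI[of _ U]) simp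
  next
    case False
    obtain Q where Q: "dpath U E Q" "hd Q = last q" "last Q = u"
      using rt less.prems(2) unfolding rooted_def by blast
    define y where "y = last (filter (\<lambda>w. w \<in> diblock U E (last q)) Q)"
    have xU: "last q \<in> U" using rt unfolding rooted_def by simp
    have y: "y \<in> diblock U E (last q)" "y \<noteq> last q" using lastB_props[OF xU False Q] y_def by auto
    have uX: "u \<in> Xset U E (last q) y" using X_char[OF rt less.prems(2) False Q] y_def by simp
    have bn: "bottleneck U E (last q) y" unfolding bottleneck_def using y uX by blast
    have cd: "cdnode V E r (q @ [y]) (Xset U E (last q) y \<union> {y})" by (rule cdnode.child[OF less.prems(1) bn])
    have yU: "y \<in> U" using y(1) diblock_sub[OF xU] by (rule subsetD[rotated])
    have sub: "Xset U E (last q) y \<union> {y} \<subseteq> U" using Xset_sub[of U E "last q" y] yU by simp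
    have lx: "last q \<notin> Xset U E (last q) y" unfolding Xset_def using x_in_diblock[of "last q" U E] by simp
    have lx2: "last q \<notin> Xset U E (last q) y \<union> {y}" using lx y(2) by simp
    have "Xset U E (last q) y \<union> {y} \<subset> U" using sub lx2 xU by (metis psubsetI)
    moreover have "finite U" using UV fin finite_subset by blast
    ultimately have "card (Xset U E (last q) y \<union> {y}) < card U" by (rule psubset_card_mono[rotated])
    then obtain q' U' where qU: "cdnode V E r q' U'" "prefix (q @ [y]) q'" "u \<in> diblock U' E (last q')"
      using less.hyps[OF _ cd] uX by blast
    have "prefix q (q @ [y])" by simp
    hence "prefix q q'" using qU(2) by (rule prefix_order.trans)
    thus ?thesis using qU by blast
  qed
qed

lemma finbags_snoc:
  "Suc (Suc i) \<le> length p \<Longrightarrow> finbags V E r (p @ [y]) i = finbags V E r p i"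
  unfolding finbags_def by simp

lemma fb_intro:
  "cdnode V E r q U \<Longrightarrow> prefix (take (Suc i) p') q \<Longrightarrow> \<not> prefix (take (Suc (Suc i)) p') q
   \<Longrightarrow> w \<in> diblock U E (last q) \<Longrightarrow> w \<in> finbags V E r p' i"
  unfolding finbags_def cdbag_def by blast

lemma prefix_same_len: "prefix xs zs \<Longrightarrow> prefix ys zs \<Longrightarrow> length xs = length ys \<Longrightarrow> xs = ys"
  by (metis prefix_length_prefix prefix_order.antisym order_refl)

lemma last_filter_in: "\<exists>w\<in>set xs. P w \<Longrightarrow> last (filter P xs) \<in> set xs \<and> P (last (filter P xs))"
proof -
  assume "\<exists>w\<in>set xs. P w"
  hence "filter P xs \<noteq> []" by (simp add: filter_empty_conv)
  hence "last (filter P xs) \<in> set (filter P xs)" by (rule last_in_set)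
  thus ?thesis by simp
qed

lemma main_claim:
  assumes rV: "rooted V E r" and fin: "finite V"
  shows "cdnode V E r p W \<Longrightarrow> dpath V E P \<Longrightarrow> hd P = r \<Longrightarrow> last P \<in> W \<Longrightarrow>
    (\<forall>i. Suc i < length p \<longrightarrow>
           (\<exists>a b. a < b \<and> b < length P \<and> P ! a = p ! i \<and> P ! b = p ! Suc i \<and>
              (\<forall>k. a \<le> k \<and> k < b \<longrightarrow> P ! k \<in> finbags V E r p i))) \<and>
    (\<exists>pre suf. P = pre @ suf \<and> suf \<noteq> [] \<and> hd suf = last p \<and> set suf \<subseteq> W)"
proof (induction arbitrary: P rule: cdnode.induct)
  case root
  have A: "\<exists>pre suf. P = pre @ suf \<and> suf \<noteq> [] \<and> hd suf = last [r] \<and> set suf \<subseteq> V"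
    using root by (intro exI[of _ "[]"] exI[of _ P]) (auto simp: dpath_alt)
  show ?case using A by simp
next
  case (child p W y)
  define x where "x = last p"
  define B where "B = diblock W E x"
  define X where "X = Xset W E x y"
  have rt: "rooted W E x" and WV: "W \<subseteq> V" using cdnode_rooted[OF child.hyps(1) rV] x_def by auto
  have xW: "x \<in> W" using rt unfolding rooted_def by simp
  have yB: "y \<in> B" "y \<noteq> x" using child.hyps(2) unfolding bottleneck_def B_def x_def by blast+
  have yW: "y \<in> W" using yB(1) diblock_sub[OF xW] B_def by blast
  have XW: "X \<subseteq> W" unfolding X_def by (rule Xset_sub)
  have xB: "x \<in> B" unfolding B_def by (rule x_in_diblock)
  have lastP: "last P \<in> X \<union> {y}" using child.prems(3) X_def x_def by simp
  hence lastPW: "last P \<in> W" using XW yW by auto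
  note IH = child.IH[OF child.prems(1,2) lastPW]
  have IH1: "\<forall>i. Suc i < length p \<longrightarrow>
           (\<exists>a b. a < b \<and> b < length P \<and> P ! a = p ! i \<and> P ! b = p ! Suc i \<and>
              (\<forall>k. a \<le> k \<and> k < b \<longrightarrow> P ! k \<in> finbags V E r p i))" using IH by (rule conjunct1)
  obtain pre suf where sp: "P = pre @ suf" "suf \<noteq> []" "hd suf = x" "set suf \<subseteq> W"
    using conjunct2[OF IH] unfolding x_def by blast
  have "dpath V E suf" using child.prems(1) sp(1,2) dpath_appendD2 by metis
  hence dsuf: "dpath W E suf" using sp(4) by (rule dpath_restrict)
  have lsuf: "last suf = last P" using sp by simp
  have dist: "distinct suf" using dsuf by (simp add: dpath_alt)
  have xsuf: "x \<in> set suf" using sp(2,3) by auto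
  obtain s1 s2 where ssp: "suf = s1 @ y # s2" "\<forall>w\<in>set s2. w \<notin> B"
  proof (cases "last P = y")
    case True
    hence "y \<in> set suf" using lsuf sp(2) last_in_set by metis
    then obtain s1 s2 where s: "suf = s1 @ y # s2" using split_list by metis
    have "s2 = []"
    proof (rule ccontr)
      assume "s2 \<noteq> []"
      hence "last s2 = y" using s lsuf True by simp
      hence "y \<in> set s2" using \<open>s2 \<noteq> []\<close> last_in_set by metis
      thus False using dist s by simp
    qed
    thus ?thesis using that s by simp
  next
    case False
    hence "last P \<in> X" using lastP by simp
    hence "\<forall>Q. dpath W E Q \<and> hd Q = x \<and> last Q = last P \<longrightarrow> last (filter (\<lambda>w. w \<in> B) Q) = y"
      unfolding X_def Xset_def B_def by simp
    hence lq: "last (filter (\<lambda>w. w \<in> B) suf) = y" using dsuf sp(3) lsuf by blast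
    obtain s1 y' s2 where s: "suf = s1 @ y' # s2" "y' \<in> B" "\<forall>w\<in>set s2. w \<notin> B"
      using split_list_last_prop[of suf "\<lambda>w. w \<in> B"] xsuf xB by metis
    have "y' = y" using lastB_split[of y' B s2 s1] s lq by simp
    thus ?thesis using that s by simp
  qed
  have s1ne: "s1 \<noteq> []" using ssp sp(3) yB(2) by (cases s1) auto
  have s2X: "set s2 \<subseteq> X"
  proof
    fix w assume w: "w \<in> set s2"
    then obtain a b where tw: "s2 = a @ w # b" using split_list by metis
    define Qw where "Qw = s1 @ y # a @ [w]"
    have "dpath W E Qw" using dsuf ssp tw dpath_appendD1[of W E Qw b] unfolding Qw_def by simp
    moreover have "hd Qw = x" using sp ssp s1ne unfolding Qw_def by simp
    moreover have "last Qw = w" unfolding Qw_def by simp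
    moreover have "w \<in> W" "w \<notin> B" using w ssp sp(4) by auto
    moreover have "last (filter (\<lambda>w. w \<in> B) Qw) = y" unfolding Qw_def
      by (rule lastB_split) (use yB ssp tw in auto)
    ultimately show "w \<in> X" using X_char[OF rt, of w Qw] B_def X_def by simp
  qed
  have new2: "\<exists>pre suf. P = pre @ suf \<and> suf \<noteq> [] \<and> hd suf = last (p @ [y]) \<and> set suf \<subseteq> X \<union> {y}"
    using sp(1) ssp s2X by (intro exI[of _ "pre @ s1"] exI[of _ "y # s2"]) auto
  have s1fin: "w \<in> finbags V E r (p @ [y]) (length p - 1)" if w: "w \<in> set s1" for w
  proof -
    have pne: "p \<noteq> []" using child.hyps(1) by (cases rule: cdnode.cases) auto
    have tk1: "take (Suc (length p - 1)) (p @ [y]) = p" using pne by simp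
    have tk2: "take (Suc (Suc (length p - 1))) (p @ [y]) = p @ [y]" using pne by simp
    have wW: "w \<in> W" using w ssp sp(4) by auto
    show ?thesis
    proof (cases "w \<in> B")
      case True
      show ?thesis by (rule fb_intro[OF child.hyps(1)]) (use tk1 tk2 True B_def x_def in auto)
    next
      case False
      obtain c1 c2 where cw: "s1 = c1 @ w # c2" using w split_list by metis
      define Qw where "Qw = c1 @ [w]"
      have dQw: "dpath W E Qw" using dsuf ssp cw dpath_appendD1[of W E Qw "c2 @ y # s2"] unfolding Qw_def by simp
      have hQw: "hd Qw = x" using sp ssp cw unfolding Qw_def by (cases c1) auto
      have lQw: "last Qw = w" unfolding Qw_def by simp
      define y' where "y' = last (filter (\<lambda>u. u \<in> B) Qw)"
      have y': "y' \<in> B" "y' \<noteq> x" using lastB_props[OF xW _ dQw hQw lQw] False y'_def B_def by auto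
      have "x \<in> set Qw" using dQw hQw dpath_hd_in by metis
      hence y'Q: "y' \<in> set Qw" using last_filter_in[of Qw "\<lambda>u. u \<in> B"] xB y'_def by blast
      have "y \<notin> set Qw" using dist ssp cw unfolding Qw_def by auto
      hence yy': "y' \<noteq> y" using y'Q by auto
      have wX: "w \<in> Xset W E x y'" using X_char[OF rt wW _ dQw hQw lQw] False y'_def B_def by simp
      have bn: "bottleneck W E (last p) y'" unfolding bottleneck_def using y' wX B_def x_def by blast
      have cd: "cdnode V E r (p @ [y']) (Xset W E (last p) y' \<union> {y'})" by (rule cdnode.child[OF child.hyps(1) bn])
      obtain q' U' where qU: "cdnode V E r q' U'" "prefix (p @ [y']) q'" "w \<in> diblock U' E (last q')"
        using covering[OF rV fin cd, of w] wX x_def by blast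
      have "prefix p (p @ [y'])" by simp
      hence pq: "prefix p q'" using qU(2) by (rule prefix_order.trans)
      have npq: "\<not> prefix (p @ [y]) q'"
      proof
        assume "prefix (p @ [y]) q'"
        hence "p @ [y] = p @ [y']" using prefix_same_len qU(2) by fastforce
        thus False using yy' by simp
      qed
      show ?thesis by (rule fb_intro[OF qU(1)]) (use tk1 tk2 pq npq qU(3) in auto)
    qed
  qed
  have new1: "\<forall>i. Suc i < length (p @ [y]) \<longrightarrow>
           (\<exists>a b. a < b \<and> b < length P \<and> P ! a = (p @ [y]) ! i \<and> P ! b = (p @ [y]) ! Suc i \<and>
              (\<forall>k. a \<le> k \<and> k < b \<longrightarrow> P ! k \<in> finbags V E r (p @ [y]) i))"
  proof (intro allI impI)
    fix i assume i: "Suc i < length (p @ [y])"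
    show "\<exists>a b. a < b \<and> b < length P \<and> P ! a = (p @ [y]) ! i \<and> P ! b = (p @ [y]) ! Suc i \<and>
              (\<forall>k. a \<le> k \<and> k < b \<longrightarrow> P ! k \<in> finbags V E r (p @ [y]) i)"
    proof (cases "Suc i < length p")
      case True
      have "(p @ [y]) ! i = p ! i" "(p @ [y]) ! Suc i = p ! Suc i" using True by (auto simp: nth_append)
      moreover have "finbags V E r (p @ [y]) i = finbags V E r p i" using True by (intro finbags_snoc) simp
      ultimately show ?thesis using IH1 True by simp
    next
      case False
      hence il: "Suc i = length p" using i by simp
      have Pe: "P = pre @ s1 @ y # s2" using sp ssp by simp
      define a where "a = length pre"
      define b where "b = length pre + length s1"
      have "a < b" using s1ne unfolding a_def b_def by simp
      moreover have "b < length P" using Pe unfolding b_def by simp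
      moreover have "P ! a = (p @ [y]) ! i"
      proof -
        have "P ! a = hd s1" using Pe s1ne unfolding a_def by (simp add: nth_append hd_conv_nth)
        also have "\<dots> = x" using sp ssp s1ne by simp
        also have "\<dots> = p ! i" using il x_def by (metis diff_Suc_1 last_conv_nth list.size(3) nat.simps(3))
        finally show ?thesis using il by (simp add: nth_append)
      qed
      moreover have "P ! b = (p @ [y]) ! Suc i" using Pe il unfolding b_def by (simp add: nth_append)
      moreover have "\<forall>k. a \<le> k \<and> k < b \<longrightarrow> P ! k \<in> finbags V E r (p @ [y]) i"
      proof (intro allI impI)
        fix k assume k: "a \<le> k \<and> k < b"
        have "P ! k = s1 ! (k - length pre)" using Pe k unfolding a_def b_def by (auto simp: nth_append)
        moreover have "s1 ! (k - length pre) \<in> set s1" using k unfolding a_def b_def by (intro nth_mem) linarith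
        moreover have "i = length p - 1" using il by simp
        ultimately show "P ! k \<in> finbags V E r (p @ [y]) i" using s1fin by simp
      qed
      ultimately show ?thesis by blast
    qed
  qed
  show ?case using new1 new2 X_def x_def by simp
qed

theorem lemma10:
  fixes V :: "'a set" and E :: "'a rel" and r v :: 'a and p P :: "'a list" and W :: "'a set"
  assumes "finite V" and "E \<subseteq> V \<times> V" and "\<forall>u. (u, u) \<notin> E"
    and "card V \<ge> 2" and "r \<in> V"
    and "\<forall>w\<in>V. \<exists>Q. dpath V E Q \<and> hd Q = r \<and> last Q = w"
    and "cdnode V E r p W"
    and "dpath V E P" and "hd P = r" and "last P = v" and "v \<in> cdbag V E r p"
  shows "\<forall>i. Suc i < length p \<longrightarrow>
           (\<exists>a b. a < b \<and> b < length P \<and> P ! a = p ! i \<and> P ! b = p ! Suc i \<and>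
              (\<forall>k. a \<le> k \<and> k < b \<longrightarrow> P ! k \<in> finbags V E r p i))"
proof -
  have rV: "rooted V E r" unfolding rooted_def using assms(5,6) by (intro conjI) auto
  obtain W' where W': "cdnode V E r p W'" "v \<in> diblock W' E (last p)"
    using assms(11) unfolding cdbag_def by auto
  have "rooted W' E (last p)" using cdnode_rooted[OF W'(1) rV] by blast
  hence "last p \<in> W'" unfolding rooted_def by simp
  hence "diblock W' E (last p) \<subseteq> W'" by (rule diblock_sub)
  hence "v \<in> W'" using W'(2) by (rule subsetD)
  hence "last P \<in> W'" using assms(10) by simp
  from main_claim[OF rV assms(1) W'(1) assms(8) assms(9) this] show ?thesis by (rule conjunct1)
qed

end
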